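(* In the setting below, suppose that $$g(x)=\gcd(g_{11}(x),g_{22}(x))=\gcd(g_{11}(x),g_{11}^*(x))=\gcd(g_{22}(x),g_{22}^*(x)),$$ that $g(x)$ is self-reciprocal, and that $g_{11}(x)g_{22}(x)$ is self-reciprocal. Then $C$ is symplectic LCD.
   Context: Let $q$ be a prime power, $F=\mathbb{F}_q$, $m\ge1$ with $\gcd(q,m)=1$, and $R=F[x]/\langle x^m-1\rangle$; elements of $R$ are represented by polynomials of degree $<m$ and identified with their coefficient vectors in $F^m$. A quasi-cyclic code of length $2m$ and index $2$ is an $R$-submodule $C\subseteq R^2$. For $a,b\in R$ let $\langle a,b\rangle_e$ be the standard dot product of their coefficient vectors. The symplectic form on $R^2$ is $\langle (a_1,a_2),(b_1,b_2)\rangle_s=\langle a_1,b_2\rangle_e-\langle a_2,b_1\rangle_e$; $C$ is symplectic LCD if $C\cap C^{\perp_s}=\{0\}$. For a nonzero polynomial $f$ of degree $k$, $f^*(x)=x^kf(x^{-1})$; $f$ is self-reciprocal if $f^*=\alpha f$ for some $\alpha\in F$. Gcds are taken monic. Suppose $C$ is generated as an $R$-module by $(g_{11}(x),g_{12}(x))$ and $(0,g_{22}(x))$, where $g_{11},g_{12},g_{22}\in F[x]$ satisfy: $g_{11}\mid x^m-1$, $g_{22}\mid x^m-1$, $\deg g_{12}<\deg g_{22}$, and $g_{11}g_{22}\mid (x^m-1)g_{12}$. *)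

theory Defs
  imports "HOL-Computational_Algebra.Computational_Algebra"
begin

definition xm1 :: "nat \<Rightarrow> 'a::field poly" where
  "xm1 m = monom 1 m - 1"

text \<open>Elements of R = F[x]/(x^m - 1) are represented by polynomials of degree < m;
  reduction of an arbitrary polynomial to its representative.\<close>
definition modR :: "nat \<Rightarrow> 'a::field poly \<Rightarrow> 'a poly" where
  "modR m p = p mod xm1 m"

definition Rspace :: "nat \<Rightarrow> 'a::field poly set" where
  "Rspace m = {p. degree p < m}"

definition ip_e :: "nat \<Rightarrow> 'a::field poly \<Rightarrow> 'a poly \<Rightarrow> 'a" where
  "ip_e m a b = (\<Sum>i<m. coeff a i * coeff b i)"

definition ip_s :: "nat \<Rightarrow> 'a::field poly \<times> 'a poly \<Rightarrow> 'a poly \<times> 'a poly \<Rightarrow> 'a" where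
  "ip_s m u v = ip_e m (fst u) (snd v) - ip_e m (snd u) (fst v)"

definition qc_code :: "nat \<Rightarrow> 'a::field poly \<Rightarrow> 'a poly \<Rightarrow> 'a poly \<Rightarrow> ('a poly \<times> 'a poly) set" where
  "qc_code m g11 g12 g22 =
     {(modR m (a * g11), modR m (a * g12 + b * g22)) | a b. a \<in> Rspace m \<and> b \<in> Rspace m}"

definition sympl_dual :: "nat \<Rightarrow> ('a::field poly \<times> 'a poly) set \<Rightarrow> ('a poly \<times> 'a poly) set" where
  "sympl_dual m C = {v. v \<in> Rspace m \<times> Rspace m \<and> (\<forall>c\<in>C. ip_s m c v = 0)}"

definition symplectic_LCD :: "nat \<Rightarrow> ('a::field poly \<times> 'a poly) set \<Rightarrow> bool" where
  "symplectic_LCD m C \<longleftrightarrow> C \<inter> sympl_dual m C = {(0, 0)}"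

text \<open>f^* = x^(deg f) f(1/x) is reflect_poly f; self-reciprocal: nonzero and f^* = \<alpha> f.\<close>
definition self_reciprocal :: "'a::field poly \<Rightarrow> bool" where
  "self_reciprocal f \<longleftrightarrow> f \<noteq> 0 \<and> (\<exists>\<alpha>. reflect_poly f = smult \<alpha> f)"

end

theory Submission
  imports Defs "HOL-Number_Theory.Cong"
begin

lemma CHAR_dvd_card_field: "CHAR('a::{field,finite}) dvd card (UNIV :: 'a set)"
proof -
  define p where "p = CHAR('a)"
  have p0: "p > 0" unfolding p_def by (rule finite_imp_CHAR_pos) simp
  define Orb where "Orb x = (\<lambda>i. x + of_nat i) ` {..<p}" for x :: 'a
  have Orb_alt: "Orb x = {y. \<exists>k. y = x + of_nat k}" for x
  proof
    show "Orb x \<subseteq> {y. \<exists>k. y = x + of_nat k}" unfolding Orb_def by auto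
    show "{y. \<exists>k. y = x + of_nat k} \<subseteq> Orb x"
    proof
      fix y assume "y \<in> {y. \<exists>k. y = x + of_nat k}"
      then obtain k where k: "y = x + of_nat k" by auto
      have "(of_nat k :: 'a) = of_nat (k mod p)"
        unfolding p_def by (simp add: of_nat_eq_iff_cong_CHAR cong_def)
      moreover have "k mod p < p" using p0 by simp
      ultimately show "y \<in> Orb x" unfolding Orb_def k by auto
    qed
  qed
  have cardO: "card (Orb x) = p" for x
  proof -
    have "inj_on (\<lambda>i. x + of_nat i :: 'a) {..<p}"
    proof (rule inj_onI)
      fix i j assume "i \<in> {..<p}" "j \<in> {..<p}" "x + of_nat i = (x + of_nat j :: 'a)"
      then have "[i = j] (mod p)" "i < p" "j < p"
        by (auto simp: p_def of_nat_eq_iff_cong_CHAR)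
      then show "i = j" by (simp add: cong_def)
    qed
    then show ?thesis unfolding Orb_def by (simp add: card_image)
  qed
  have memO: "y \<in> Orb x \<Longrightarrow> Orb y = Orb x" for x y
  proof -
    assume "y \<in> Orb x"
    then obtain k where k: "y = x + of_nat k" by (auto simp: Orb_alt)
    have sub: "Orb y \<subseteq> Orb x"
      by (auto simp: Orb_alt k) (metis add.assoc of_nat_add)
    have "(of_nat (k + (p - k mod p)) :: 'a) = 0"
    proof -
      have lt: "k mod p < p" using p0 by simp
      have "k + (p - k mod p) = p * (k div p + 1)"
      proof -
        have e: "p * (k div p) + k mod p = k" by (rule mult_div_mod_eq)
        have d: "p * (k div p + 1) = p * (k div p) + p" by (simp add: algebra_simps)
        show ?thesis using lt e d by linarith
      qed
      then have "p dvd k + (p - k mod p)" by simp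
      then show ?thesis unfolding p_def by (simp only: of_nat_eq_0_iff_char_dvd)
    qed
    then have "x = y + of_nat (p - k mod p)" by (simp add: k add.assoc flip: of_nat_add)
    then have "Orb x \<subseteq> Orb y"
      by (auto simp: Orb_alt) (metis add.assoc of_nat_add)
    with sub show ?thesis by blast
  qed
  have "p * card (Orb ` UNIV) = card (\<Union> (Orb ` UNIV))"
    apply (rule card_partition)
    using cardO memO apply (auto simp: disjoint_iff) by (metis memO)+
  moreover have "\<Union> (Orb ` UNIV) = UNIV"
  proof -
    have "x \<in> Orb x" for x unfolding Orb_alt by (auto intro: exI[of _ 0])
    then show ?thesis by blast
  qed
  ultimately show ?thesis unfolding p_def[symmetric] by (metis dvd_triv_left)
qed


lemma of_nat_m_nz:
  assumes "coprime (card (UNIV :: 'a::{field,finite} set)) m"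
  shows "(of_nat m :: 'a) \<noteq> 0"
proof
  assume "(of_nat m :: 'a) = 0"
  hence "CHAR('a) dvd m" by (simp add: of_nat_eq_0_iff_char_dvd)
  moreover have "CHAR('a) dvd card (UNIV :: 'a set)" by (rule CHAR_dvd_card_field)
  ultimately have "CHAR('a) dvd 1" using assms coprime_common_divisor by blast
  hence "CHAR('a) = 1" by simp
  hence "(of_nat 1 :: 'a) = 0" by (metis of_nat_CHAR)
  thus False by simp
qed

lemma coeff_xm1: "coeff (xm1 m :: 'a::field poly) i = (if i = m then 1 else 0) - (if i = 0 then 1 else 0)"
  by (simp add: xm1_def coeff_monom)

lemma degree_xm1: "m \<ge> 1 \<Longrightarrow> degree (xm1 m :: 'a::field poly) = m"
proof -
  assume m: "m \<ge> 1"
  have "degree (xm1 m :: 'a poly) \<le> m"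
    by (rule degree_le) (use m in \<open>auto simp: coeff_xm1\<close>)
  moreover have "coeff (xm1 m :: 'a poly) m \<noteq> 0" using m by (simp add: coeff_xm1)
  ultimately show ?thesis by (meson le_degree le_antisym)
qed

lemma xm1_nz: "m \<ge> 1 \<Longrightarrow> xm1 m \<noteq> (0::'a::field poly)"
  using degree_xm1[of m] by (metis degree_0 not_one_le_zero)

lemma reflect_xm1: "m \<ge> 1 \<Longrightarrow> reflect_poly (xm1 m :: 'a::field poly) = - xm1 m"
  by (rule poly_eqI) (auto simp: coeff_reflect_poly degree_xm1 coeff_xm1)

lemma xm1_sqf:
  fixes p :: "'a::field poly"
  assumes m: "m \<ge> 1" and nz: "(of_nat m :: 'a) \<noteq> 0" and d: "p ^ 2 dvd xm1 m"
  shows "is_unit p"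
proof -
  obtain q where q0: "xm1 m = p ^ 2 * q" using d by (elim dvdE)
  have q: "xm1 m = p * (p * q)" using q0 by (simp add: power2_eq_square mult.assoc)
  have "pderiv (xm1 m) = p * pderiv (p * q) + (p * q) * pderiv p"
    unfolding q by (rule pderiv_mult)
  hence "p dvd pderiv (xm1 m)" by simp
  moreover have "pderiv (xm1 m :: 'a poly) = smult (of_nat m) (monom 1 (m - 1))"
    by (simp add: xm1_def pderiv_diff pderiv_monom smult_monom)
  ultimately have "p dvd monom 1 (m - 1)" using nz by (metis dvd_smult_cancel)
  hence "p dvd monom 1 (m - 1) * [:0, 1:]" using dvd_mult2 by blast
  moreover have "monom 1 (m - 1) * [:0, 1:] = xm1 m + (1 :: 'a poly)"
    using m by (simp add: xm1_def monom_Suc flip: monom_Suc)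
  ultimately have "p dvd xm1 m + 1" by simp
  moreover have "p dvd xm1 m" using d by (meson dvd_power dvd_trans zero_less_numeral)
  ultimately have "p dvd 1" by (metis dvd_add_right_iff)
  thus ?thesis .
qed

lemma sqf_dvd:
  fixes n X :: "'a::field_gcd poly"
  assumes n: "n \<noteq> 0" and sq: "\<And>p. prime p \<Longrightarrow> \<not> p ^ 2 dvd n"
    and pr: "\<And>p. prime p \<Longrightarrow> p dvd n \<Longrightarrow> p dvd X"
  shows "n dvd X"
proof (cases "X = 0")
  case True then show ?thesis by simp
next
  case X: False
  show ?thesis
  proof (rule multiplicity_le_imp_dvd[OF n])
    fix p :: "'a poly" assume p: "prime p"
    show "multiplicity p n \<le> multiplicity p X"
    proof (cases "p dvd n")
      case True
      have "multiplicity p n < 2"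
        using sq[OF p] power_dvd_iff_le_multiplicity[where p=p and n=2 and x=n] n p not_prime_unit[of p] by fastforce
      moreover have "1 \<le> multiplicity p X"
        using pr[OF p True] power_dvd_iff_le_multiplicity[where p=p and n=1 and x=X] X p not_prime_unit[of p] by fastforce
      ultimately show ?thesis by simp
    next
      case False
      then show ?thesis by (simp add: not_dvd_imp_multiplicity_0)
    qed
  qed
qed


definition revm :: "nat \<Rightarrow> 'a::field poly \<Rightarrow> 'a poly" where
  "revm m p = (\<Sum>i<m. monom (coeff p i) (m - 1 - i))"

lemma coeff_revm: "coeff (revm m p) j = (if j < m then coeff p (m - 1 - j) else 0)"
proof -
  have "coeff (revm m p) j = (\<Sum>i<m. if i = m - 1 - j \<and> j < m then coeff p i else 0)"
    unfolding revm_def coeff_sum coeff_monom by (rule sum.cong) auto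
  also have "\<dots> = (if j < m then coeff p (m - 1 - j) else 0)"
    by (cases "j < m") (auto simp: sum.delta)
  finally show ?thesis .
qed

lemma degree_revm: "m \<ge> 1 \<Longrightarrow> degree (revm m p) < m"
proof -
  assume m: "m \<ge> 1"
  have "degree (revm m p) \<le> m - 1" by (rule degree_le) (auto simp: coeff_revm)
  with m show ?thesis by linarith
qed

lemma revm_revm: "degree p < m \<Longrightarrow> revm m (revm m p) = p"
  by (rule poly_eqI) (auto simp: coeff_revm coeff_eq_0)

lemma revm_0 [simp]: "revm m 0 = 0"
  by (simp add: revm_def)

lemma revm_reflect: "degree p < m \<Longrightarrow> revm m p = monom 1 (m - 1 - degree p) * reflect_poly p"
  by (rule poly_eqI) (auto simp: coeff_revm coeff_monom_mult coeff_reflect_poly coeff_eq_0)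

lemma coeff_mod_xm1:
  fixes f :: "'a::field poly"
  assumes m: "m \<ge> 1" and df: "degree f < 2 * m - 1"
  shows "coeff (f mod xm1 m) (m - 1) = coeff f (m - 1)"
proof -
  define lo where "lo = poly_cutoff m f"
  define hi where "hi = poly_shift m f"
  have f: "f = (lo + hi) + xm1 m * hi"
    by (rule poly_eqI) (auto simp: lo_def hi_def xm1_def coeff_poly_cutoff coeff_poly_shift
        algebra_simps coeff_monom_mult)
  have dl: "degree (lo + hi) < m"
  proof -
    have "degree (lo + hi) \<le> m - 1"
    proof (rule degree_le, intro allI impI)
      fix i assume "i > m - 1"
      then show "coeff (lo + hi) i = 0"
        using df by (auto simp: lo_def hi_def coeff_poly_cutoff coeff_poly_shift intro!: coeff_eq_0)
    qed
    with m show ?thesis by linarith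
  qed
  have "f mod xm1 m = (lo + hi) mod xm1 m" by (subst f) simp
  also have "\<dots> = lo + hi" using dl m by (intro mod_poly_less) (simp add: degree_xm1)
  finally have "coeff (f mod xm1 m) (m - 1) = coeff lo (m - 1) + coeff hi (m - 1)" by simp
  also have "coeff hi (m - 1) = 0"
    using df m by (auto simp: hi_def coeff_poly_shift intro!: coeff_eq_0)
  also have "coeff lo (m - 1) = coeff f (m - 1)" using m by (simp add: lo_def coeff_poly_cutoff)
  finally show ?thesis by simp
qed

lemma ip_e_revm:
  fixes a b :: "'a::field poly"
  assumes m: "m \<ge> 1" and "degree b < m"
  shows "ip_e m a b = coeff (a * revm m b) (m - 1)"
proof -
  have "coeff (a * revm m b) (m - 1) = (\<Sum>i\<le>m - 1. coeff a i * coeff (revm m b) (m - 1 - i))"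
    by (rule coeff_mult)
  also have "\<dots> = (\<Sum>i\<le>m - 1. coeff a i * coeff b i)"
    using m by (intro sum.cong) (auto simp: coeff_revm)
  also have "{..m - 1} = {..<m}" using m by auto
  finally show ?thesis by (simp add: ip_e_def)
qed

lemma ip_e_mod:
  fixes p b :: "'a::field poly"
  assumes m: "m \<ge> 1" and db: "degree b < m"
  shows "ip_e m (p mod xm1 m) b = coeff ((p * revm m b) mod xm1 m) (m - 1)"
proof -
  have dp: "degree (p mod xm1 m) < m"
    using degree_mod_less[OF xm1_nz[OF m], of p] m by (auto simp: degree_xm1)
  have "ip_e m (p mod xm1 m) b = coeff ((p mod xm1 m) * revm m b) (m - 1)"
    by (rule ip_e_revm[OF m db])
  also have "\<dots> = coeff (((p mod xm1 m) * revm m b) mod xm1 m) (m - 1)"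
  proof (rule coeff_mod_xm1[OF m, symmetric])
    have "degree ((p mod xm1 m) * revm m b) \<le> degree (p mod xm1 m) + degree (revm m b)"
      by (rule degree_mult_le)
    then show "degree ((p mod xm1 m) * revm m b) < 2 * m - 1"
      using dp degree_revm[OF m, of b] by linarith
  qed
  also have "((p mod xm1 m) * revm m b) mod xm1 m = (p * revm m b) mod xm1 m"
    by (rule mod_mult_left_eq)
  finally show ?thesis .
qed

lemma xm1_dvd_from_coeffs:
  fixes H :: "'a::field poly"
  assumes m: "m \<ge> 1" and z: "\<And>k. k < m \<Longrightarrow> coeff ((monom 1 k * H) mod xm1 m) (m - 1) = 0"
  shows "xm1 m dvd H"
proof -
  define h where "h = H mod xm1 m"
  have dh: "degree h < m"
    using degree_mod_less[OF xm1_nz[OF m], of H] m by (auto simp: degree_xm1 h_def)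
  have "coeff h j = 0" for j
  proof (cases "j < m")
    case True
    define k where "k = m - 1 - j"
    have k: "k < m" using m by (simp add: k_def)
    have "(monom 1 k * H) mod xm1 m = (monom 1 k * h) mod xm1 m"
      unfolding h_def by (rule mod_mult_right_eq[symmetric])
    hence "coeff ((monom 1 k * h) mod xm1 m) (m - 1) = 0" using z[OF k] by simp
    moreover have "coeff ((monom 1 k * h) mod xm1 m) (m - 1) = coeff (monom 1 k * h) (m - 1)"
    proof (rule coeff_mod_xm1[OF m])
      have "degree (monom 1 k * h) \<le> degree (monom 1 k :: 'a poly) + degree h"
        by (rule degree_mult_le)
      then show "degree (monom 1 k * h) < 2 * m - 1"
        using dh k by (simp add: degree_monom_eq)
    qed
    moreover have "coeff (monom 1 k * h) (m - 1) = coeff h j"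
      using True by (simp add: coeff_monom_mult k_def)
    ultimately show ?thesis by simp
  next
    case False
    then show ?thesis using dh by (intro coeff_eq_0) simp
  qed
  hence "h = 0" by (simp add: poly_eq_iff)
  thus ?thesis by (simp add: h_def mod_eq_0_iff_dvd)
qed


lemma dual_conds:
  fixes g11 g12 g22 :: "'a::field poly"
  assumes m: "m \<ge> 1" and v: "(v1, v2) \<in> sympl_dual m (qc_code m g11 g12 g22)"
  shows "xm1 m dvd g22 * revm m v1" and "xm1 m dvd g11 * revm m v2 - g12 * revm m v1"
proof -
  have d1: "degree v1 < m" and d2: "degree v2 < m" and
    orth: "\<And>c. c \<in> qc_code m g11 g12 g22 \<Longrightarrow> ip_s m c (v1, v2) = 0"
    using v by (auto simp: sympl_dual_def Rspace_def)
  have mk: "monom 1 k \<in> Rspace m" if "k < m" for k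
    using that by (simp add: Rspace_def degree_monom_eq)
  have z0: "(0::'a poly) \<in> Rspace m" using m by (simp add: Rspace_def)
  show "xm1 m dvd g22 * revm m v1"
  proof (rule xm1_dvd_from_coeffs[OF m])
    fix k assume k: "k < m"
    have "(modR m (0 * g11), modR m (0 * g12 + monom 1 k * g22)) \<in> qc_code m g11 g12 g22"
      unfolding qc_code_def using mk[OF k] z0 by blast
    hence "ip_s m (0, (monom 1 k * g22) mod xm1 m) (v1, v2) = 0"
      using orth by (simp add: modR_def)
    hence "ip_e m ((monom 1 k * g22) mod xm1 m) v1 = 0"
      by (simp add: ip_s_def ip_e_def)
    thus "coeff ((monom 1 k * (g22 * revm m v1)) mod xm1 m) (m - 1) = 0"
      by (simp add: ip_e_mod[OF m d1] mult.assoc)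
  qed
  show "xm1 m dvd g11 * revm m v2 - g12 * revm m v1"
  proof (rule xm1_dvd_from_coeffs[OF m])
    fix k assume k: "k < m"
    have "(modR m (monom 1 k * g11), modR m (monom 1 k * g12 + 0 * g22)) \<in> qc_code m g11 g12 g22"
      unfolding qc_code_def using mk[OF k] z0 by blast
    hence "ip_s m ((monom 1 k * g11) mod xm1 m, (monom 1 k * g12) mod xm1 m) (v1, v2) = 0"
      using orth by (simp add: modR_def)
    hence "ip_e m ((monom 1 k * g11) mod xm1 m) v2 - ip_e m ((monom 1 k * g12) mod xm1 m) v1 = 0"
      by (simp add: ip_s_def)
    thus "coeff ((monom 1 k * (g11 * revm m v2 - g12 * revm m v1)) mod xm1 m) (m - 1) = 0"
      by (simp add: ip_e_mod[OF m d1] ip_e_mod[OF m d2] mult.assoc right_diff_distrib poly_mod_diff_left)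
  qed
qed

lemma reflect_dvd: "(a::'a::field poly) dvd b \<Longrightarrow> reflect_poly a dvd reflect_poly b"
  by (auto elim!: dvdE simp: reflect_poly_mult)

lemma RL:
  fixes g v p :: "'a::field_gcd poly"
  assumes m: "m \<ge> 1" and p: "prime p" and pn: "p dvd xm1 m"
    and d: "xm1 m dvd g * revm m v" and dv: "degree v < m"
  shows "p dvd reflect_poly g \<or> p dvd v"
proof -
  have "reflect_poly (xm1 m) dvd reflect_poly (g * revm m v)" by (rule reflect_dvd[OF d])
  hence "xm1 m dvd reflect_poly g * reflect_poly (revm m v)"
    by (simp add: reflect_xm1[OF m] reflect_poly_mult)
  hence "p dvd reflect_poly g * reflect_poly (revm m v)" using pn dvd_trans by blast
  hence "p dvd reflect_poly g \<or> p dvd reflect_poly (revm m v)" using p by (simp add: prime_dvd_mult_iff)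
  moreover have "reflect_poly (revm m v) dvd v"
  proof -
    have "v = revm m (revm m v)" using dv by (simp add: revm_revm)
    also have "\<dots> = monom 1 (m - 1 - degree (revm m v)) * reflect_poly (revm m v)"
      using degree_revm[OF m] by (rule revm_reflect)
    finally show ?thesis by (metis dvd_triv_right)
  qed
  ultimately show ?thesis using dvd_trans by blast
qed


theorem corollary5p7:
  fixes g11 g12 g22 :: "'a::{field_gcd,finite} poly" and m :: nat
  assumes "m \<ge> 1"
    and "coprime (card (UNIV :: 'a set)) m"
    and "g11 dvd xm1 m"
    and "g22 dvd xm1 m"
    and "degree g12 < degree g22"
    and "g11 * g22 dvd xm1 m * g12"
    and "gcd g11 g22 = gcd g11 (reflect_poly g11)"
    and "gcd g11 g22 = gcd g22 (reflect_poly g22)"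
    and "self_reciprocal (gcd g11 g22)"
    and "self_reciprocal (g11 * g22)"
  shows "symplectic_LCD m (qc_code m g11 g12 g22)"
proof -
  note m = assms(1)
  define n where "n = (xm1 m :: 'a poly)"
  have n0: "n \<noteq> 0" using xm1_nz[OF m] by (simp add: n_def)
  have dn: "degree n = m" using degree_xm1[OF m] by (simp add: n_def)
  have sq: "\<not> p ^ 2 dvd n" if "prime p" for p :: "'a poly"
    using xm1_sqf[OF m of_nat_m_nz[OF assms(2)]] that not_prime_unit n_def by blast
  obtain \<alpha> where al: "reflect_poly (g11 * g22) = smult \<alpha> (g11 * g22)" and g0: "g11 * g22 \<noteq> 0"
    using assms(10) by (auto simp: self_reciprocal_def)
  have al0: "\<alpha> \<noteq> 0" using al g0 by auto
  have SR: "p dvd g11 * g22" if "p dvd reflect_poly g11 * reflect_poly g22" for p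
    using that al al0 by (metis dvd_smult_cancel reflect_poly_mult)
  have G1: "p dvd g22" if "p dvd g11" "p dvd reflect_poly g11" for p
  proof -
    have "p dvd gcd g11 (reflect_poly g11)" using that by simp
    hence "p dvd gcd g11 g22" using assms(7) by simp
    thus ?thesis by (meson dvd_trans gcd_dvd2)
  qed
  have G2: "p dvd g11" if "p dvd g22" "p dvd reflect_poly g22" for p
  proof -
    have "p dvd gcd g22 (reflect_poly g22)" using that by simp
    hence "p dvd gcd g11 g22" using assms(8) by simp
    thus ?thesis by (meson dvd_trans gcd_dvd1)
  qed
  have P12: "p dvd g12" if p: "prime p" "p dvd g11" "p dvd g22" for p
  proof (rule ccontr)
    assume np: "\<not> p dvd g12"
    have "p ^ 2 dvd g11 * g22" using p by (simp add: power2_eq_square mult_dvd_mono)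
    hence "p ^ 2 dvd n * g12" using assms(6) n_def dvd_trans by blast
    moreover have "coprime (p ^ 2) g12" using np p by (simp add: prime_imp_coprime)
    ultimately have "p ^ 2 dvd n" by (metis coprime_dvd_mult_left_iff)
    with sq[OF p(1)] show False by simp
  qed
  have modn: "p dvd X mod n \<longleftrightarrow> p dvd X" if "p dvd n" for p X :: "'a poly"
    using that by (rule dvd_mod_iff)
  show ?thesis unfolding symplectic_LCD_def
  proof (intro equalityI subsetI)
    fix v assume "v \<in> {(0::'a poly, 0::'a poly)}"
    hence v: "v = (0, 0)" by simp
    have "v \<in> qc_code m g11 g12 g22"
      unfolding qc_code_def v using m by (auto simp: modR_def Rspace_def intro!: exI[of _ 0])
    moreover have "v \<in> sympl_dual m (qc_code m g11 g12 g22)"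
      using m by (simp add: v sympl_dual_def Rspace_def ip_s_def ip_e_def)
    ultimately show "v \<in> qc_code m g11 g12 g22 \<inter> sympl_dual m (qc_code m g11 g12 g22)" by blast
  next
    fix v assume vC: "v \<in> qc_code m g11 g12 g22 \<inter> sympl_dual m (qc_code m g11 g12 g22)"
    obtain v1 v2 where vv: "v = (v1, v2)" by (cases v)
    from vC obtain a b where v1: "v1 = (a * g11) mod n" and v2: "v2 = (a * g12 + b * g22) mod n"
      by (auto simp: vv qc_code_def modR_def n_def)
    have vD: "(v1, v2) \<in> sympl_dual m (qc_code m g11 g12 g22)" using vC vv by simp
    have d1: "degree v1 < m" and d2: "degree v2 < m" using vD by (auto simp: sympl_dual_def Rspace_def)
    note D = dual_conds[OF m vD]
    have "n dvd v1"
    proof (rule sqf_dvd[OF n0 sq])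
      fix p :: "'a poly" assume p: "prime p" and pn: "p dvd n"
      show "p dvd v1"
      proof (rule ccontr)
        assume np: "\<not> p dvd v1"
        hence npa: "\<not> p dvd a * g11" using modn[OF pn] v1 by simp
        hence ng11: "\<not> p dvd g11" by (meson dvd_mult)
        have "p dvd reflect_poly g22" using RL[OF m p pn[unfolded n_def] D(1) d1] np by blast
        hence "p dvd g11 * g22" using SR by (meson dvd_mult)
        hence "p dvd g22" using p ng11 by (simp add: prime_dvd_mult_iff)
        hence "p dvd g11" using G2 \<open>p dvd reflect_poly g22\<close> by blast
        with ng11 show False by simp
      qed
    qed
    hence v10: "v1 = 0" using d1 dn by (metis mod_poly_less dvd_imp_mod_0)
    have nag: "n dvd a * g11" using v1 v10 by (simp add: mod_eq_0_iff_dvd)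
    have D2: "xm1 m dvd g11 * revm m v2" using D(2) v10 by simp
    have "n dvd v2"
    proof (rule sqf_dvd[OF n0 sq])
      fix p :: "'a poly" assume p: "prime p" and pn: "p dvd n"
      show "p dvd v2"
      proof (rule ccontr)
        assume np: "\<not> p dvd v2"
        hence nps: "\<not> p dvd a * g12 + b * g22" using modn[OF pn] v2 by simp
        have r11: "p dvd reflect_poly g11" using RL[OF m p pn[unfolded n_def] D2 d2] np by blast
        show False
        proof (cases "p dvd g22")
          case True
          hence "\<not> p dvd a * g12" using nps by (meson dvd_add dvd_mult)
          hence na: "\<not> p dvd a" and n12: "\<not> p dvd g12" by (meson dvd_mult dvd_mult2)+
          have "p dvd a * g11" using nag pn dvd_trans by blast
          hence "p dvd g11" using na p by (simp add: prime_dvd_mult_iff)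
          with P12[OF p _ True] n12 show False by blast
        next
          case False
          have "p dvd reflect_poly g11 * reflect_poly g22" using r11 by (rule dvd_mult2)
          hence "p dvd g11 * g22" by (rule SR)
          hence "p dvd g11" using p False by (simp add: prime_dvd_mult_iff)
          hence "p dvd g22" using G1 r11 by blast
          with False show False by simp
        qed
      qed
    qed
    hence v20: "v2 = 0" using d2 dn by (metis mod_poly_less dvd_imp_mod_0)
    show "v \<in> {(0, 0)}" using vv v10 v20 by simp
  qed
qed

end
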